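(* Let $\mathcal{N}$ be a 2-step nilpotent Lie algebra over $\mathbb{R}$ and suppose $\mathcal{N}=\mathcal{N}_0\oplus\mathcal{A}$ is a direct sum of ideals with $\mathcal{A}$ abelian and $[\mathcal{N}_0,\mathcal{N}_0]=\mathfrak{z}(\mathcal{N}_0)$, the center of $\mathcal{N}_0$. Then every Lie ring automorphism $f$ of $\mathcal{N}$ has the form $f=\mu\circ g$, where $\mu$ is a central automorphism of $\mathcal{N}$ and $g$ is a Lie ring automorphism of $\mathcal{N}$ with $g(\mathcal{N}_0)=\mathcal{N}_0$ and $g(Y)=Y$ for all $Y\in\mathcal{A}$. In particular, if $\mathcal{N}_0$ satisfies the partial automatic continuity, then so does $\mathcal{N}$.
   Context: A Lie ring automorphism of a real Lie algebra is a bijective additive map preserving the bracket (not necessarily $\mathbb{R}$-linear). A central automorphism is a Lie ring automorphism $\mu$ with $\mu(x)-x$ in the center for all $x$. Field automorphisms: if a Lie algebra is a direct sum of ideals $\mathcal{N}_1\oplus\cdots\oplus\mathcal{N}_k$, for each $\mathcal{N}_i$ that is the realification of a complex Lie algebra choose a $\mathbb{C}$-basis $e_1,\dots,e_m$ and a field automorphism $\varphi$ of $\mathbb{C}$ fixing the structure constants and set $\sigma_i(\sum x_le_l)=\sum\varphi(x_l)e_l$, otherwise $\sigma_i=\mathrm{id}$; $\sigma_1\times\cdots\times\sigma_k$ is a field automorphism. A real nilpotent Lie algebra satisfies the partial automatic continuity if every Lie ring automorphism is a composition $\mu\circ\overline{f}\circ\sigma$ of a central automorphism $\mu$, an $\mathbb{R}$-linear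 Lie algebra automorphism $\overline{f}$ and a field automorphism $\sigma$. *)

theory Defs
  imports "HOL-Analysis.Analysis"
begin

definition lie_algebra :: "'a::real_vector set \<Rightarrow> ('a \<Rightarrow> 'a \<Rightarrow> 'a) \<Rightarrow> bool" where
  "lie_algebra S br \<longleftrightarrow> subspace S \<and>
     (\<forall>x\<in>S. \<forall>y\<in>S. br x y \<in> S) \<and>
     (\<forall>a::real. \<forall>x\<in>S. \<forall>y\<in>S. \<forall>z\<in>S. br (a *\<^sub>R x + y) z = a *\<^sub>R br x z + br y z) \<and>
     (\<forall>a::real. \<forall>x\<in>S. \<forall>y\<in>S. \<forall>z\<in>S. br z (a *\<^sub>R x + y) = a *\<^sub>R br z x + br z y) \<and>
     (\<forall>x\<in>S. br x x = 0) \<and>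
     (\<forall>x\<in>S. \<forall>y\<in>S. \<forall>z\<in>S. br x (br y z) + br y (br z x) + br z (br x y) = 0)"

definition lie_ideal :: "'a::real_vector set \<Rightarrow> ('a \<Rightarrow> 'a \<Rightarrow> 'a) \<Rightarrow> 'a set \<Rightarrow> bool" where
  "lie_ideal S br I \<longleftrightarrow> subspace I \<and> I \<subseteq> S \<and> (\<forall>x\<in>S. \<forall>y\<in>I. br x y \<in> I)"

definition lie_center :: "'a::real_vector set \<Rightarrow> ('a \<Rightarrow> 'a \<Rightarrow> 'a) \<Rightarrow> 'a set" where
  "lie_center S br = {z\<in>S. \<forall>x\<in>S. br z x = 0}"

definition derived :: "'a::real_vector set \<Rightarrow> ('a \<Rightarrow> 'a \<Rightarrow> 'a) \<Rightarrow> 'a set" where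
  "derived S br = span {br x y | x y. x \<in> S \<and> y \<in> S}"

definition two_step_nilpotent :: "'a::real_vector set \<Rightarrow> ('a \<Rightarrow> 'a \<Rightarrow> 'a) \<Rightarrow> bool" where
  "two_step_nilpotent S br \<longleftrightarrow>
     (\<forall>x\<in>S. \<forall>y\<in>S. \<forall>z\<in>S. br x (br y z) = 0) \<and> (\<exists>x\<in>S. \<exists>y\<in>S. br x y \<noteq> 0)"

definition lie_abelian :: "'a::real_vector set \<Rightarrow> ('a \<Rightarrow> 'a \<Rightarrow> 'a) \<Rightarrow> bool" where
  "lie_abelian S br \<longleftrightarrow> (\<forall>x\<in>S. \<forall>y\<in>S. br x y = 0)"

text \<open>Lie ring automorphism: bijective additive bracket-preserving map (not necessarily R-linear).\<close>
definition lie_ring_aut :: "'a::real_vector set \<Rightarrow> ('a \<Rightarrow> 'a \<Rightarrow> 'a) \<Rightarrow> ('a \<Rightarrow> 'a) \<Rightarrow> bool" where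
  "lie_ring_aut S br f \<longleftrightarrow> bij_betw f S S \<and>
     (\<forall>x\<in>S. \<forall>y\<in>S. f (x + y) = f x + f y) \<and>
     (\<forall>x\<in>S. \<forall>y\<in>S. f (br x y) = br (f x) (f y))"

definition lie_alg_aut :: "'a::real_vector set \<Rightarrow> ('a \<Rightarrow> 'a \<Rightarrow> 'a) \<Rightarrow> ('a \<Rightarrow> 'a) \<Rightarrow> bool" where
  "lie_alg_aut S br f \<longleftrightarrow> lie_ring_aut S br f \<and> (\<forall>c::real. \<forall>x\<in>S. f (c *\<^sub>R x) = c *\<^sub>R f x)"

definition central_aut :: "'a::real_vector set \<Rightarrow> ('a \<Rightarrow> 'a \<Rightarrow> 'a) \<Rightarrow> ('a \<Rightarrow> 'a) \<Rightarrow> bool" where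
  "central_aut S br \<mu> \<longleftrightarrow> lie_ring_aut S br \<mu> \<and> (\<forall>x\<in>S. \<mu> x - x \<in> lie_center S br)"

text \<open>Field automorphisms of the complex numbers (arbitrary, not necessarily continuous).\<close>
definition complex_field_aut :: "(complex \<Rightarrow> complex) \<Rightarrow> bool" where
  "complex_field_aut \<phi> \<longleftrightarrow> bij \<phi> \<and> (\<forall>a b. \<phi> (a + b) = \<phi> a + \<phi> b) \<and> (\<forall>a b. \<phi> (a * b) = \<phi> a * \<phi> b)"

definition cscale :: "('a::real_vector \<Rightarrow> 'a) \<Rightarrow> complex \<Rightarrow> 'a \<Rightarrow> 'a" where
  "cscale J c v = Re c *\<^sub>R v + Im c *\<^sub>R J v"

text \<open>I (with the bracket br) is the realification of a complex Lie algebra,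
i.e. carries a complex structure J for which the bracket is complex bilinear.\<close>
definition complex_structure :: "'a::real_vector set \<Rightarrow> ('a \<Rightarrow> 'a \<Rightarrow> 'a) \<Rightarrow> ('a \<Rightarrow> 'a) \<Rightarrow> bool" where
  "complex_structure I br J \<longleftrightarrow> (\<forall>v\<in>I. J v \<in> I) \<and>
     (\<forall>a::real. \<forall>v\<in>I. \<forall>w\<in>I. J (a *\<^sub>R v + w) = a *\<^sub>R J v + J w) \<and>
     (\<forall>v\<in>I. J (J v) = - v) \<and>
     (\<forall>x\<in>I. \<forall>y\<in>I. br (J x) y = J (br x y))"

definition complex_basis :: "'a::real_vector set \<Rightarrow> ('a \<Rightarrow> 'a) \<Rightarrow> nat \<Rightarrow> (nat \<Rightarrow> 'a) \<Rightarrow> bool" where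
  "complex_basis I J m e \<longleftrightarrow> (\<forall>l<m. e l \<in> I) \<and>
     (\<forall>v\<in>I. \<exists>x. v = (\<Sum>l<m. cscale J (x l) (e l))) \<and>
     (\<forall>x. (\<Sum>l<m. cscale J (x l) (e l)) = 0 \<longrightarrow> (\<forall>l<m. x l = 0))"

text \<open>Admissible factor sigma_i on the ideal I: either the identity, or, if I is the
realification of a complex Lie algebra, the map induced by a field automorphism phi of C
fixing the structure constants w.r.t. a C-basis.\<close>
definition factor_field_aut :: "'a::real_vector set \<Rightarrow> ('a \<Rightarrow> 'a \<Rightarrow> 'a) \<Rightarrow> ('a \<Rightarrow> 'a) \<Rightarrow> bool" where
  "factor_field_aut I br \<sigma> \<longleftrightarrow> (\<forall>v\<in>I. \<sigma> v = v) \<or>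
     (\<exists>J m e \<phi>. complex_structure I br J \<and> complex_basis I J m e \<and> complex_field_aut \<phi> \<and>
        (\<forall>i<m. \<forall>j<m. \<exists>c. br (e i) (e j) = (\<Sum>l<m. cscale J (c l) (e l)) \<and> (\<forall>l<m. \<phi> (c l) = c l)) \<and>
        (\<forall>x. \<sigma> (\<Sum>l<m. cscale J (x l) (e l)) = (\<Sum>l<m. cscale J (\<phi> (x l)) (e l))))"

text \<open>sigma is a field automorphism of (S, br): S = N_0 + ... + N_(k-1) is a direct sum
of ideals and sigma = sigma_0 \<times> ... \<times> sigma_(k-1) with admissible factors.\<close>
definition field_aut :: "'a::real_vector set \<Rightarrow> ('a \<Rightarrow> 'a \<Rightarrow> 'a) \<Rightarrow> ('a \<Rightarrow> 'a) \<Rightarrow> bool" where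
  "field_aut S br \<sigma> \<longleftrightarrow> (\<exists>k::nat. \<exists>N :: nat \<Rightarrow> 'a set. \<exists>\<sigma>s :: nat \<Rightarrow> 'a \<Rightarrow> 'a.
     (\<forall>i<k. lie_ideal S br (N i)) \<and>
     S = {(\<Sum>i<k. xs i) | xs. \<forall>i<k. xs i \<in> N i} \<and>
     (\<forall>xs. (\<forall>i<k. xs i \<in> N i) \<and> (\<Sum>i<k. xs i) = 0 \<longrightarrow> (\<forall>i<k. xs i = 0)) \<and>
     (\<forall>i<k. factor_field_aut (N i) br (\<sigma>s i)) \<and>
     (\<forall>xs. (\<forall>i<k. xs i \<in> N i) \<longrightarrow> \<sigma> (\<Sum>i<k. xs i) = (\<Sum>i<k. \<sigma>s i (xs i))))"

definition partial_automatic_continuity :: "'a::real_vector set \<Rightarrow> ('a \<Rightarrow> 'a \<Rightarrow> 'a) \<Rightarrow> bool" where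
  "partial_automatic_continuity S br \<longleftrightarrow>
     (\<forall>f. lie_ring_aut S br f \<longrightarrow>
        (\<exists>\<mu> fbar \<sigma>. central_aut S br \<mu> \<and> lie_alg_aut S br fbar \<and> field_aut S br \<sigma> \<and>
           (\<forall>x\<in>S. f x = \<mu> (fbar (\<sigma> x)))))"

end

theory Submission
  imports Defs
begin

locale setting =
  fixes br :: "'a::real_vector \<Rightarrow> 'a \<Rightarrow> 'a" and N0 A :: "'a set"
  assumes LA: "lie_algebra UNIV br"
    and I0: "lie_ideal UNIV br N0" and IA: "lie_ideal UNIV br A"
    and disj: "N0 \<inter> A = {0}" and sumU: "N0 + A = UNIV"
    and ab: "lie_abelian A br"
    and der: "derived N0 br = lie_center N0 br"
begin

lemma br_lin1: "br (a *\<^sub>R x + y) z = a *\<^sub>R br x z + br y z"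
  using LA unfolding lie_algebra_def by blast
lemma br_lin2: "br z (a *\<^sub>R x + y) = a *\<^sub>R br z x + br z y"
  using LA unfolding lie_algebra_def by blast
lemma br_refl: "br x x = 0"
  using LA unfolding lie_algebra_def by blast

lemma br_add1: "br (x + y) z = br x z + br y z"
  using br_lin1[where a=1 and x=x and y=y and z=z] by simp
lemma br_add2: "br z (x + y) = br z x + br z y"
  using br_lin2[where a=1 and z=z and x=x and y=y] by simp
lemma br_zero1[simp]: "br 0 z = 0"
  using br_add1[where x=0 and y=0 and z=z] by simp
lemma br_zero2[simp]: "br z 0 = 0"
  using br_add2[where z=z and x=0 and y=0] by simp
lemma br_scale1: "br (a *\<^sub>R x) z = a *\<^sub>R br x z"
  using br_lin1[where a=a and x=x and y=0 and z=z] by simp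
lemma br_scale2: "br z (a *\<^sub>R x) = a *\<^sub>R br z x"
  using br_lin2[where a=a and z=z and x=x and y=0] by simp
lemma br_anti: "br x y = - br y x"
proof -
  have "0 = br (x + y) (x + y)" by (simp add: br_refl)
  also have "\<dots> = br x y + br y x" by (subst br_add1, subst br_add2, subst br_add2, simp add: br_refl)
  finally have "br x y + br y x = 0" by (rule sym)
  then show ?thesis by (simp add: eq_neg_iff_add_eq_0)
qed

lemma sub0: "subspace N0" using I0 unfolding lie_ideal_def by blast
lemma subA: "subspace A" using IA unfolding lie_ideal_def by blast
lemma id0: "y \<in> N0 \<Longrightarrow> br x y \<in> N0" using I0 unfolding lie_ideal_def by blast
lemma idA: "y \<in> A \<Longrightarrow> br x y \<in> A" using IA unfolding lie_ideal_def by blast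

lemma A_central1: "a \<in> A \<Longrightarrow> br a u = 0"
proof -
  assume a: "a \<in> A"
  have "u \<in> N0 + A" using sumU by simp
  then obtain X Y where u: "u = X + Y" "X \<in> N0" "Y \<in> A"
    by (auto elim: set_plus_elim)
  have "br a Y = 0" using ab a u unfolding lie_abelian_def by blast
  moreover have "br a X \<in> N0" using id0 u by blast
  moreover have "br a X \<in> A" using idA[OF a, of X] br_anti[of a X] subA
    by (simp add: subspace_neg)
  ultimately show "br a u = 0" using disj u by (auto simp: br_add2)
qed

lemma A_central2: "a \<in> A \<Longrightarrow> br u a = 0"
  using br_anti[of u a] A_central1[of a u] by simp

lemma decomp_ex: "\<exists>X Y. X \<in> N0 \<and> Y \<in> A \<and> x = X + Y"
proof -
  have "x \<in> N0 + A" using sumU by simp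
  then obtain X Y where "x = X + Y" "X \<in> N0" "Y \<in> A" by (rule set_plus_elim)
  then show ?thesis by blast
qed

lemma decomp_uniq:
  assumes "X \<in> N0" "Y \<in> A" "X' \<in> N0" "Y' \<in> A" "X + Y = X' + Y'"
  shows "X = X' \<and> Y = Y'"
proof -
  have "X - X' = (X + Y) - (X' + Y)" by simp
  also have "\<dots> = (X' + Y') - (X' + Y)" by (simp only: assms(5))
  also have "\<dots> = Y' - Y" by simp
  finally have e: "X - X' = Y' - Y" .
  moreover have "X - X' \<in> N0" using assms sub0 by (simp add: subspace_diff)
  moreover have "Y' - Y \<in> A" using assms subA by (simp add: subspace_diff)
  ultimately have "X - X' \<in> N0 \<inter> A" by simp
  then have "X - X' = 0" using disj by blast
  then have "X = X'" by simp
  then show ?thesis using assms(5) by simp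
qed

definition p0 :: "'a \<Rightarrow> 'a" where "p0 x = (THE X. X \<in> N0 \<and> x - X \<in> A)"
definition pA :: "'a \<Rightarrow> 'a" where "pA x = x - p0 x"

lemma p0_eq: assumes "X \<in> N0" "Y \<in> A" shows "p0 (X + Y) = X"
  unfolding p0_def
proof (rule the_equality)
  show "X \<in> N0 \<and> X + Y - X \<in> A" using assms by (simp only: add_diff_cancel_left' conj_absorb)
next
  fix X' assume "X' \<in> N0 \<and> X + Y - X' \<in> A"
  then have "X' \<in> N0" "X + Y - X' \<in> A" by auto
  moreover have "X' + (X + Y - X') = X + Y" by simp
  ultimately have "X' = X \<and> X + Y - X' = Y" by (rule decomp_uniq[OF _ _ assms])
  then show "X' = X" by (rule conjunct1)
qed

lemma p0_in: "p0 x \<in> N0" and pA_in: "pA x \<in> A" and decomp: "p0 x + pA x = x"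
proof -
  obtain X Y where XY: "X \<in> N0" "Y \<in> A" "x = X + Y" using decomp_ex by blast
  have px: "p0 x = X" using p0_eq[OF XY(1,2)] XY(3) by simp
  show "p0 x \<in> N0" using px XY(1) by simp
  show "pA x \<in> A" unfolding pA_def px using XY by simp
  show "p0 x + pA x = x" unfolding pA_def by simp
qed

lemma pA_eq: assumes "X \<in> N0" "Y \<in> A" shows "pA (X + Y) = Y"
  using p0_eq[OF assms] unfolding pA_def by simp

lemma zA: "0 \<in> A" by (rule subspace_0[OF subA])
lemma z0: "0 \<in> N0" by (rule subspace_0[OF sub0])
lemma p0_N0: "X \<in> N0 \<Longrightarrow> p0 X = X" using p0_eq[OF _ zA, of X] by simp
lemma p0_A: "Y \<in> A \<Longrightarrow> p0 Y = 0" using p0_eq[OF z0, of Y] by simp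
lemma pA_A: "Y \<in> A \<Longrightarrow> pA Y = Y" using p0_A unfolding pA_def by simp
lemma pA_N0: "X \<in> N0 \<Longrightarrow> pA X = 0" using p0_N0 unfolding pA_def by simp

lemma p0_add: "p0 (x + y) = p0 x + p0 y"
proof -
  have "x + y = (p0 x + p0 y) + (pA x + pA y)" using decomp[of x] decomp[of y] by (simp add: algebra_simps)
  then show ?thesis using p0_eq[of "p0 x + p0 y" "pA x + pA y"] p0_in pA_in sub0 subA
    by (simp add: subspace_add)
qed
lemma pA_add: "pA (x + y) = pA x + pA y" using p0_add unfolding pA_def by (simp add: algebra_simps)
lemma p0_scale: "p0 (c *\<^sub>R x) = c *\<^sub>R p0 x"
proof -
  have "c *\<^sub>R x = c *\<^sub>R p0 x + c *\<^sub>R pA x" using decomp[of x] by (metis scaleR_right_distrib)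
  then show ?thesis using p0_eq[of "c *\<^sub>R p0 x" "c *\<^sub>R pA x"] p0_in pA_in sub0 subA
    by (simp add: subspace_scale)
qed
lemma pA_scale: "pA (c *\<^sub>R x) = c *\<^sub>R pA x" using p0_scale unfolding pA_def by (simp add: algebra_simps)
lemma p0_diff: "p0 (x - y) = p0 x - p0 y" using p0_add[of "x - y" y] by simp

lemma br_p0: "br x y = br (p0 x) (p0 y)"
proof -
  have "br x y = br (p0 x + pA x) (p0 y + pA y)" using decomp by simp
  also have "\<dots> = br (p0 x) (p0 y)"
    by (simp add: br_add1 br_add2 A_central1 A_central2 pA_in)
  finally show ?thesis .
qed

lemma br_in_N0: "br x y \<in> N0" by (subst br_p0) (rule id0[OF p0_in])


lemma center_iff: "z \<in> lie_center UNIV br \<longleftrightarrow> (\<forall>x. br z x = 0)"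
  unfolding lie_center_def by simp

lemma center_add: "a \<in> lie_center UNIV br \<Longrightarrow> b \<in> lie_center UNIV br \<Longrightarrow> a + b \<in> lie_center UNIV br"
  unfolding center_iff by (simp add: br_add1)

lemma center_neg: "a \<in> lie_center UNIV br \<Longrightarrow> - a \<in> lie_center UNIV br"
proof -
  assume a: "a \<in> lie_center UNIV br"
  have "br (- a) x = 0" for x using br_scale1[of "-1" a x] a unfolding center_iff by simp
  then show ?thesis unfolding center_iff by blast
qed

lemma center_diff: "a \<in> lie_center UNIV br \<Longrightarrow> b \<in> lie_center UNIV br \<Longrightarrow> a - b \<in> lie_center UNIV br"
  using center_add[of a "- b"] center_neg[of b] by simp

lemma A_center: "a \<in> A \<Longrightarrow> a \<in> lie_center UNIV br"
  unfolding center_iff using A_central1 by blast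

lemma center0_center: "z \<in> lie_center N0 br \<Longrightarrow> z \<in> lie_center UNIV br"
proof -
  assume z: "z \<in> lie_center N0 br"
  have "br z x = 0" for x
  proof -
    have "br z x = br (p0 z) (p0 x)" by (rule br_p0)
    also have "p0 z = z" using z p0_N0 unfolding lie_center_def by blast
    finally show ?thesis using z p0_in unfolding lie_center_def by auto
  qed
  then show ?thesis unfolding center_iff by blast
qed

lemma aut_zero: "lie_ring_aut UNIV br f \<Longrightarrow> f 0 = 0"
  unfolding lie_ring_aut_def
proof -
  assume "bij_betw f UNIV UNIV \<and> (\<forall>x\<in>UNIV. \<forall>y\<in>UNIV. f (x + y) = f x + f y) \<and> (\<forall>x\<in>UNIV. \<forall>y\<in>UNIV. f (br x y) = br (f x) (f y))"
  then have "f (0 + 0) = f 0 + f 0" by blast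
  then show "f 0 = 0" by simp
qed

lemma aut_add: "lie_ring_aut UNIV br f \<Longrightarrow> f (x + y) = f x + f y"
  unfolding lie_ring_aut_def by blast
lemma aut_br: "lie_ring_aut UNIV br f \<Longrightarrow> f (br x y) = br (f x) (f y)"
  unfolding lie_ring_aut_def by blast
lemma aut_bij: "lie_ring_aut UNIV br f \<Longrightarrow> bij f"
  unfolding lie_ring_aut_def by blast
lemma aut_diff: "lie_ring_aut UNIV br f \<Longrightarrow> f (x - y) = f x - f y"
  using aut_add[of f "x - y" y] by simp

lemma aut_center: "lie_ring_aut UNIV br f \<Longrightarrow> z \<in> lie_center UNIV br \<Longrightarrow> f z \<in> lie_center UNIV br"
proof -
  assume f: "lie_ring_aut UNIV br f" and z: "z \<in> lie_center UNIV br"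
  have "br (f z) u = 0" for u
  proof -
    obtain v where v: "u = f v" using aut_bij[OF f] by (metis bij_pointE)
    have "br (f z) (f v) = f (br z v)" using aut_br[OF f] by simp
    also have "\<dots> = 0" using z aut_zero[OF f] unfolding center_iff by simp
    finally show ?thesis using v by simp
  qed
  then show ?thesis unfolding center_iff by blast
qed

lemma aut_center_rev: "lie_ring_aut UNIV br f \<Longrightarrow> f z \<in> lie_center UNIV br \<Longrightarrow> z \<in> lie_center UNIV br"
proof -
  assume f: "lie_ring_aut UNIV br f" and z: "f z \<in> lie_center UNIV br"
  have "br z v = 0" for v
  proof -
    have "f (br z v) = br (f z) (f v)" using aut_br[OF f] by simp
    also have "\<dots> = f 0" using z aut_zero[OF f] unfolding center_iff by simp
    finally show ?thesis using aut_bij[OF f] by (simp add: bij_def inj_eq)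
  qed
  then show ?thesis unfolding center_iff by blast
qed

lemma aut_inv: "lie_ring_aut UNIV br f \<Longrightarrow> lie_ring_aut UNIV br (inv f)"
proof -
  assume f: "lie_ring_aut UNIV br f"
  have b: "bij f" by (rule aut_bij[OF f])
  have ff: "f (inv f a) = a" for a using b by (simp add: bij_is_surj surj_f_inv_f)
  have fi: "inv f (f a) = a" for a using b by (simp add: bij_is_inj inv_f_f)
  have add: "inv f (x + y) = inv f x + inv f y" for x y
  proof -
    have "x + y = f (inv f x + inv f y)" using aut_add[OF f] ff by simp
    then show ?thesis using fi by simp
  qed
  have brr: "inv f (br x y) = br (inv f x) (inv f y)" for x y
  proof -
    have "br x y = f (br (inv f x) (inv f y))" using aut_br[OF f] ff by simp
    then show ?thesis using fi by simp
  qed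
  show ?thesis unfolding lie_ring_aut_def using bij_imp_bij_inv[OF b] add brr by blast
qed

lemma aut_comp: "lie_ring_aut UNIV br f \<Longrightarrow> lie_ring_aut UNIV br g \<Longrightarrow> lie_ring_aut UNIV br (f \<circ> g)"
  unfolding lie_ring_aut_def by (simp add: bij_comp)

lemma aut_derived:
  assumes f: "lie_ring_aut UNIV br f" and z: "z \<in> derived N0 br"
  shows "f z \<in> N0"
proof -
  have "z \<in> span {br x y | x y. x \<in> N0 \<and> y \<in> N0}" using z unfolding derived_def .
  then show ?thesis
  proof (induction rule: span_induct_alt)
    case base
    then show ?case using aut_zero[OF f] z0 by simp
  next
    case (step c x y)
    then obtain u v where x: "x = br u v" by blast
    have "c *\<^sub>R x = br (c *\<^sub>R u) v" using x br_scale1 by simp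
    then have "f (c *\<^sub>R x + y) = br (f (c *\<^sub>R u)) (f v) + f y" using aut_add[OF f] aut_br[OF f] by simp
    then show ?case using step(2) br_in_N0 sub0 by (simp add: subspace_add)
  qed
qed


definition ext :: "('a \<Rightarrow> 'a) \<Rightarrow> 'a \<Rightarrow> 'a" where "ext h x = h (p0 x) + pA x"

lemma ext_aut:
  assumes h: "lie_ring_aut N0 br h"
  shows "lie_ring_aut UNIV br (ext h)" and "ext h ` N0 = N0" and "\<forall>Y\<in>A. ext h Y = Y"
    and "\<And>X. X \<in> N0 \<Longrightarrow> ext h X = h X"
proof -
  have hb: "bij_betw h N0 N0" and hadd: "\<And>x y. x \<in> N0 \<Longrightarrow> y \<in> N0 \<Longrightarrow> h (x + y) = h x + h y"
    and hbr: "\<And>x y. x \<in> N0 \<Longrightarrow> y \<in> N0 \<Longrightarrow> h (br x y) = br (h x) (h y)"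
    using h unfolding lie_ring_aut_def by blast+
  have himg: "h ` N0 = N0" using hb by (simp add: bij_betw_def)
  have hinj: "inj_on h N0" using hb by (simp add: bij_betw_def)
  have hin: "X \<in> N0 \<Longrightarrow> h X \<in> N0" for X using himg by blast
  have h0: "h 0 = 0" using hadd[OF z0 z0] by simp
  have p0e: "p0 (ext h x) = h (p0 x)" for x unfolding ext_def using p0_eq[OF hin[OF p0_in] pA_in] .
  have pAe: "pA (ext h x) = pA x" for x unfolding ext_def using pA_eq[OF hin[OF p0_in] pA_in] .
  have inj: "inj (ext h)"
  proof (rule injI)
    fix x y assume e: "ext h x = ext h y"
    then have "h (p0 x) = h (p0 y)" using p0e by metis
    then have "p0 x = p0 y" using hinj p0_in by (meson inj_onD)
    moreover have "pA x = pA y" using e pAe by metis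
    ultimately show "x = y" using decomp by metis
  qed
  have surj: "surj (ext h)"
  proof -
    have "z \<in> range (ext h)" for z
    proof -
      have "p0 z \<in> h ` N0" using himg p0_in by simp
      then obtain X where X: "X \<in> N0" "p0 z = h X" by blast
      have "ext h (X + pA z) = h X + pA z" unfolding ext_def using p0_eq[OF X(1) pA_in] pA_eq[OF X(1) pA_in] by simp
      then have "ext h (X + pA z) = z" by (metis X(2) decomp)
      then show ?thesis by (metis rangeI)
    qed
    then show ?thesis by blast
  qed
  have add: "ext h (x + y) = ext h x + ext h y" for x y
    unfolding ext_def p0_add pA_add using hadd[OF p0_in p0_in] by (simp add: algebra_simps)
  have brr: "ext h (br x y) = br (ext h x) (ext h y)" for x y
  proof -
    have "ext h (br x y) = h (br (p0 x) (p0 y))"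
      unfolding ext_def using p0_N0[OF br_in_N0] pA_N0[OF br_in_N0] br_p0[of x y] by simp
    also have "\<dots> = br (h (p0 x)) (h (p0 y))" using hbr[OF p0_in p0_in] .
    also have "\<dots> = br (ext h x) (ext h y)" using br_p0[of "ext h x" "ext h y"] p0e by simp
    finally show ?thesis .
  qed
  show "lie_ring_aut UNIV br (ext h)" unfolding lie_ring_aut_def using inj surj add brr
    by (simp add: bij_def)
  show "\<forall>Y\<in>A. ext h Y = Y" unfolding ext_def using p0_A pA_A h0 by simp
  show ext_N0: "\<And>X. X \<in> N0 \<Longrightarrow> ext h X = h X" unfolding ext_def using p0_N0 pA_N0 by simp
  show "ext h ` N0 = N0" using himg ext_N0 by (metis image_cong)
qed

lemma ext_scale:
  assumes "\<And>c X. X \<in> N0 \<Longrightarrow> h (c *\<^sub>R X) = c *\<^sub>R h X"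
  shows "ext h (c *\<^sub>R x) = c *\<^sub>R ext h x"
  unfolding ext_def p0_scale pA_scale using assms[OF p0_in] by (simp add: scaleR_right_distrib)

lemma g0_aut:
  assumes f: "lie_ring_aut UNIV br f"
  shows "lie_ring_aut N0 br (\<lambda>X. p0 (f X))"
proof -
  let ?g = "\<lambda>X. p0 (f X)"
  have add: "?g (x + y) = ?g x + ?g y" for x y using aut_add[OF f] p0_add by simp
  have brr: "?g (br x y) = br (?g x) (?g y)" for x y
    using aut_br[OF f] p0_N0[OF br_in_N0] br_p0 by metis
  have fi: "lie_ring_aut UNIV br (inv f)" by (rule aut_inv[OF f])
  have b: "bij f" by (rule aut_bij[OF f])
  have ff: "f (inv f a) = a" for a using b by (simp add: bij_is_surj surj_f_inv_f)
  have inj: "inj_on ?g N0"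
  proof (rule inj_onI)
    fix x y assume x: "x \<in> N0" and y: "y \<in> N0" and e: "?g x = ?g y"
    let ?X = "x - y"
    have X: "?X \<in> N0" using x y sub0 by (simp add: subspace_diff)
    have "?g ?X = 0" using e aut_diff[OF f] p0_diff by simp
    then have fXA: "f ?X \<in> A" using decomp[of "f ?X"] pA_in[of "f ?X"] by simp
    then have "?X \<in> lie_center UNIV br" using aut_center_rev[OF f] A_center by blast
    then have "?X \<in> lie_center N0 br" using X unfolding lie_center_def by simp
    then have "?X \<in> derived N0 br" using der by simp
    then have "f ?X \<in> N0" by (rule aut_derived[OF f])
    then have "f ?X = 0" using fXA disj by blast
    then have "f ?X = f 0" using aut_zero[OF f] by simp
    then have "?X = 0" using b by (simp add: bij_def inj_eq)
    then show "x = y" by simp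
  qed
  have surj: "?g ` N0 = N0"
  proof
    show "?g ` N0 \<subseteq> N0" using p0_in by blast
    show "N0 \<subseteq> ?g ` N0"
    proof
      fix Z assume Z: "Z \<in> N0"
      obtain W where W: "Z = f W" using b by (metis bij_pointE)
      let ?X = "p0 W" and ?Y = "pA W"
      have fY: "f ?Y \<in> lie_center UNIV br" using aut_center[OF f A_center[OF pA_in]] .
      have "p0 (f ?Y) \<in> lie_center N0 br"
      proof -
        have "br (p0 (f ?Y)) u = 0" if "u \<in> N0" for u
        proof -
          have "br (f ?Y) u = br (p0 (f ?Y) + pA (f ?Y)) u" using decomp by simp
          then have "br (f ?Y) u = br (p0 (f ?Y)) u" by (simp add: br_add1 A_central1 pA_in)
          then show ?thesis using fY unfolding center_iff by simp
        qed
        then show ?thesis unfolding lie_center_def using p0_in by blast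
      qed
      then have D: "p0 (f ?Y) \<in> derived N0 br" using der by simp
      let ?X' = "inv f (p0 (f ?Y))"
      have X': "?X' \<in> N0" using aut_derived[OF fi D] .
      have fX': "f ?X' = p0 (f ?Y)" using ff by simp
      have "Z = p0 Z" using p0_N0[OF Z] by simp
      also have "\<dots> = p0 (f ?X) + p0 (f ?Y)" using W decomp[of W] aut_add[OF f] p0_add by metis
      also have "\<dots> = p0 (f ?X) + p0 (f ?X')" using fX' p0_N0[OF p0_in] by simp
      also have "\<dots> = ?g (?X + ?X')" using add by simp
      finally have "Z = ?g (?X + ?X')" .
      moreover have "?X + ?X' \<in> N0" using X' p0_in sub0 by (simp add: subspace_add)
      ultimately show "Z \<in> ?g ` N0" by blast
    qed
  qed
  show ?thesis unfolding lie_ring_aut_def bij_betw_def using inj surj add brr by blast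
qed

lemma part1:
  assumes f: "lie_ring_aut UNIV br f"
  shows "\<exists>\<mu> g. central_aut UNIV br \<mu> \<and> lie_ring_aut UNIV br g \<and>
                   g ` N0 = N0 \<and> (\<forall>Y\<in>A. g Y = Y) \<and> f = \<mu> \<circ> g"
proof -
  let ?hh = "\<lambda>X. p0 (f X)"
  let ?g = "ext ?hh"
  have g0: "lie_ring_aut N0 br ?hh" by (rule g0_aut[OF f])
  have g: "lie_ring_aut UNIV br ?g" and gN: "?g ` N0 = N0" and gA: "\<forall>Y\<in>A. ?g Y = Y"
    using ext_aut[OF g0] by blast+
  have gb: "bij ?g" by (rule aut_bij[OF g])
  let ?mu = "f \<circ> inv ?g"
  have mu: "lie_ring_aut UNIV br ?mu" by (rule aut_comp[OF f aut_inv[OF g]])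
  have fe: "f = ?mu \<circ> ?g" using gb by (simp add: fun_eq_iff bij_is_inj inv_f_f)
  have cen: "?mu u - u \<in> lie_center UNIV br" for u
  proof -
    obtain y where y: "u = ?g y" using gb by (metis bij_pointE)
    have mu_u: "?mu u = f y" using y gb by (simp add: bij_is_inj inv_f_f)
    have "f y = f (p0 y) + f (pA y)" using decomp[of y] aut_add[OF f] by metis
    moreover have "?g y = p0 (f (p0 y)) + pA y" unfolding ext_def by simp
    ultimately have "?mu u - u = (f (p0 y) - p0 (f (p0 y))) + f (pA y) - pA y"
      using mu_u y by simp
    also have "\<dots> = pA (f (p0 y)) + f (pA y) - pA y" unfolding pA_def by simp
    finally show ?thesis
      using center_add center_diff A_center pA_in aut_center[OF f A_center[OF pA_in]] by metis
  qed
  have "central_aut UNIV br ?mu" unfolding central_aut_def using mu cen by blast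
  then show ?thesis using g gN gA fe by blast
qed


lemma factor_pres:
  assumes I: "subspace I" and fa: "factor_field_aut I br \<sigma>" and v: "v \<in> I"
  shows "\<sigma> v \<in> I"
  using fa unfolding factor_field_aut_def
proof (elim disjE exE conjE)
  assume "\<forall>v\<in>I. \<sigma> v = v"
  then show ?thesis using v by simp
next
  fix J m e \<phi>
  assume cs: "complex_structure I br J" and cb: "complex_basis I J m e"
    and eq: "\<forall>x. \<sigma> (\<Sum>l<m. cscale J (x l) (e l)) = (\<Sum>l<m. cscale J (\<phi> (x l)) (e l))"
  obtain x where x: "v = (\<Sum>l<m. cscale J (x l) (e l))" using cb v unfolding complex_basis_def by blast
  have el: "l < m \<Longrightarrow> e l \<in> I" for l using cb unfolding complex_basis_def by blast
  have Jl: "l < m \<Longrightarrow> J (e l) \<in> I" for l using cs el unfolding complex_structure_def by blast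
  have "(\<Sum>l<m. cscale J (\<phi> (x l)) (e l)) \<in> I"
    by (rule subspace_sum[OF I]) (simp add: cscale_def subspace_add[OF I] subspace_scale[OF I] el Jl)
  then show ?thesis using eq x by simp
qed

lemma field_ext:
  assumes fa: "field_aut N0 br \<sigma>"
  shows "field_aut UNIV br (ext \<sigma>)" and "\<And>X. X \<in> N0 \<Longrightarrow> \<sigma> X \<in> N0"
proof -
  have ex: "\<exists>(k::nat) (N::nat \<Rightarrow> 'a set) (\<sigma>s::nat \<Rightarrow> 'a \<Rightarrow> 'a). (\<forall>i<k. lie_ideal N0 br (N i)) \<and>
     N0 = {(\<Sum>i<k. xs i) | xs. \<forall>i<k. xs i \<in> N i} \<and>
     (\<forall>xs. (\<forall>i<k. xs i \<in> N i) \<and> (\<Sum>i<k. xs i) = 0 \<longrightarrow> (\<forall>i<k. xs i = 0)) \<and>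
     (\<forall>i<k. factor_field_aut (N i) br (\<sigma>s i)) \<and>
     (\<forall>xs. (\<forall>i<k. xs i \<in> N i) \<longrightarrow> \<sigma> (\<Sum>i<k. xs i) = (\<Sum>i<k. \<sigma>s i (xs i)))"
    using fa unfolding field_aut_def .
  then obtain k :: nat where "\<exists>(N::nat \<Rightarrow> 'a set) (\<sigma>s::nat \<Rightarrow> 'a \<Rightarrow> 'a). (\<forall>i<k. lie_ideal N0 br (N i)) \<and>
     N0 = {(\<Sum>i<k. xs i) | xs. \<forall>i<k. xs i \<in> N i} \<and>
     (\<forall>xs. (\<forall>i<k. xs i \<in> N i) \<and> (\<Sum>i<k. xs i) = 0 \<longrightarrow> (\<forall>i<k. xs i = 0)) \<and>
     (\<forall>i<k. factor_field_aut (N i) br (\<sigma>s i)) \<and>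
     (\<forall>xs. (\<forall>i<k. xs i \<in> N i) \<longrightarrow> \<sigma> (\<Sum>i<k. xs i) = (\<Sum>i<k. \<sigma>s i (xs i)))" ..
  then obtain N :: "nat \<Rightarrow> 'a set" where "\<exists>\<sigma>s::nat \<Rightarrow> 'a \<Rightarrow> 'a. (\<forall>i<k. lie_ideal N0 br (N i)) \<and>
     N0 = {(\<Sum>i<k. xs i) | xs. \<forall>i<k. xs i \<in> N i} \<and>
     (\<forall>xs. (\<forall>i<k. xs i \<in> N i) \<and> (\<Sum>i<k. xs i) = 0 \<longrightarrow> (\<forall>i<k. xs i = 0)) \<and>
     (\<forall>i<k. factor_field_aut (N i) br (\<sigma>s i)) \<and>
     (\<forall>xs. (\<forall>i<k. xs i \<in> N i) \<longrightarrow> \<sigma> (\<Sum>i<k. xs i) = (\<Sum>i<k. \<sigma>s i (xs i)))" ..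
  then obtain \<sigma>s :: "nat \<Rightarrow> 'a \<Rightarrow> 'a" where H: "(\<forall>i<k. lie_ideal N0 br (N i)) \<and>
     N0 = {(\<Sum>i<k. xs i) | xs. \<forall>i<k. xs i \<in> N i} \<and>
     (\<forall>xs. (\<forall>i<k. xs i \<in> N i) \<and> (\<Sum>i<k. xs i) = 0 \<longrightarrow> (\<forall>i<k. xs i = 0)) \<and>
     (\<forall>i<k. factor_field_aut (N i) br (\<sigma>s i)) \<and>
     (\<forall>xs. (\<forall>i<k. xs i \<in> N i) \<longrightarrow> \<sigma> (\<Sum>i<k. xs i) = (\<Sum>i<k. \<sigma>s i (xs i)))" ..
  note ideals = H[THEN conjunct1]
  note spn = H[THEN conjunct2, THEN conjunct1]
  note uniq = H[THEN conjunct2, THEN conjunct2, THEN conjunct1]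
  note fac = H[THEN conjunct2, THEN conjunct2, THEN conjunct2, THEN conjunct1]
  note eq = H[THEN conjunct2, THEN conjunct2, THEN conjunct2, THEN conjunct2]
  have subN: "i < k \<Longrightarrow> subspace (N i)" for i using ideals unfolding lie_ideal_def by blast
  have NN0: "i < k \<Longrightarrow> N i \<subseteq> N0" for i using ideals unfolding lie_ideal_def by blast
  have brN: "i < k \<Longrightarrow> x \<in> N0 \<Longrightarrow> y \<in> N i \<Longrightarrow> br x y \<in> N i" for i x y
    using ideals unfolding lie_ideal_def by blast
  have sumN0: "(\<forall>i<k. xs i \<in> N i) \<Longrightarrow> (\<Sum>i<k. xs i) \<in> N0" for xs
    using spn by blast
  show pres: "\<And>X. X \<in> N0 \<Longrightarrow> \<sigma> X \<in> N0"
  proof -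
    fix X assume "X \<in> N0"
    then obtain xs where xs: "\<forall>i<k. xs i \<in> N i" "X = (\<Sum>i<k. xs i)" using spn by blast
    have "\<sigma> X = (\<Sum>i<k. \<sigma>s i (xs i))" using eq xs by simp
    also have "\<dots> \<in> N0"
    proof (rule subspace_sum[OF sub0])
      fix i assume "i \<in> {..<k}"
      then have i: "i < k" by simp
      have "\<sigma>s i (xs i) \<in> N i" using factor_pres[OF subN[OF i]] fac xs i by blast
      then show "\<sigma>s i (xs i) \<in> N0" using NN0[OF i] by blast
    qed
    finally show "\<sigma> X \<in> N0" .
  qed
  define N' where "N' i = (if i < k then N i else A)" for i
  define \<sigma>s' where "\<sigma>s' i = (if i < k then \<sigma>s i else id)" for i
  have N'k: "N' k = A" unfolding N'_def by simp
  have N'i: "i < k \<Longrightarrow> N' i = N i" for i unfolding N'_def by simp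
  have a: "\<forall>i<Suc k. lie_ideal UNIV br (N' i)"
  proof (intro allI impI)
    fix i assume "i < Suc k"
    then consider "i < k" | "i = k" by linarith
    then show "lie_ideal UNIV br (N' i)"
    proof cases
      case 1
      have "br x y \<in> N i" if "y \<in> N i" for x y
      proof -
        have "br x y = br (p0 x) (p0 y)" by (rule br_p0)
        also have "p0 y = y" using p0_N0 NN0[OF 1] that by blast
        finally show ?thesis using brN[OF 1 p0_in that] by simp
      qed
      then show ?thesis unfolding lie_ideal_def N'i[OF 1] using subN[OF 1] by blast
    next
      case 2
      then show ?thesis using N'k IA by simp
    qed
  qed
  have split: "(\<Sum>i<Suc k. xs i) = (\<Sum>i<k. xs i) + xs k" for xs :: "nat \<Rightarrow> 'a" by simp
  have memb: "(\<forall>i<Suc k. xs i \<in> N' i) \<longleftrightarrow> (\<forall>i<k. xs i \<in> N i) \<and> xs k \<in> A" for xs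
    unfolding N'_def using less_Suc_eq by auto
  have b: "UNIV = {(\<Sum>i<Suc k. xs i) | xs. \<forall>i<Suc k. xs i \<in> N' i}"
  proof -
    have "z \<in> {(\<Sum>i<Suc k. xs i) | xs. \<forall>i<Suc k. xs i \<in> N' i}" for z
    proof -
      have "p0 z \<in> N0" by (rule p0_in)
      then obtain ys where ys: "\<forall>i<k. ys i \<in> N i" "p0 z = (\<Sum>i<k. ys i)" using spn by blast
      define xs where "xs = ys(k := pA z)"
      have "(\<Sum>i<k. xs i) = (\<Sum>i<k. ys i)" unfolding xs_def by (rule sum.cong) auto
      then have "(\<Sum>i<Suc k. xs i) = z" unfolding split using ys decomp[of z] by (simp add: xs_def)
      moreover have "\<forall>i<Suc k. xs i \<in> N' i" unfolding memb xs_def using ys pA_in by simp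
      ultimately show ?thesis by blast
    qed
    then show ?thesis by blast
  qed
  have c: "\<forall>xs. (\<forall>i<Suc k. xs i \<in> N' i) \<and> (\<Sum>i<Suc k. xs i) = 0 \<longrightarrow> (\<forall>i<Suc k. xs i = 0)"
  proof (rule allI, rule impI, elim conjE)
    fix xs assume m: "\<forall>i<Suc k. xs i \<in> N' i" and s: "(\<Sum>i<Suc k. xs i) = 0"
    have m1: "\<forall>i<k. xs i \<in> N i" and m2: "xs k \<in> A" using m unfolding memb by blast+
    have "(\<Sum>i<k. xs i) + xs k = 0 + 0" using s split by simp
    then have "(\<Sum>i<k. xs i) = 0 \<and> xs k = 0" using decomp_uniq[OF sumN0[OF m1] m2 z0 zA] by blast
    then have "\<forall>i<k. xs i = 0" "xs k = 0" using uniq m1 by blast+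
    then show "\<forall>i<Suc k. xs i = 0" using less_Suc_eq by auto
  qed
  have d: "\<forall>i<Suc k. factor_field_aut (N' i) br (\<sigma>s' i)"
  proof (intro allI impI)
    fix i assume "i < Suc k"
    then consider "i < k" | "i = k" by linarith
    then show "factor_field_aut (N' i) br (\<sigma>s' i)"
    proof cases
      case 1 then show ?thesis using fac unfolding N'_def \<sigma>s'_def by simp
    next
      case 2 then show ?thesis unfolding factor_field_aut_def \<sigma>s'_def by simp
    qed
  qed
  have e: "\<forall>xs. (\<forall>i<Suc k. xs i \<in> N' i) \<longrightarrow> ext \<sigma> (\<Sum>i<Suc k. xs i) = (\<Sum>i<Suc k. \<sigma>s' i (xs i))"
  proof (rule allI, rule impI)
    fix xs assume m: "\<forall>i<Suc k. xs i \<in> N' i"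
    have m1: "\<forall>i<k. xs i \<in> N i" and m2: "xs k \<in> A" using m unfolding memb by blast+
    have S: "(\<Sum>i<k. xs i) \<in> N0" by (rule sumN0[OF m1])
    have "ext \<sigma> (\<Sum>i<Suc k. xs i) = \<sigma> (\<Sum>i<k. xs i) + xs k"
      unfolding split ext_def p0_eq[OF S m2] pA_eq[OF S m2] ..
    also have "\<dots> = (\<Sum>i<k. \<sigma>s i (xs i)) + xs k" using eq m1 by simp
    also have "(\<Sum>i<k. \<sigma>s i (xs i)) = (\<Sum>i<k. \<sigma>s' i (xs i))" unfolding \<sigma>s'_def by (rule sum.cong) auto
    also have "xs k = \<sigma>s' k (xs k)" unfolding \<sigma>s'_def by simp
    finally show "ext \<sigma> (\<Sum>i<Suc k. xs i) = (\<Sum>i<Suc k. \<sigma>s' i (xs i))" by simp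
  qed
  show "field_aut UNIV br (ext \<sigma>)" unfolding field_aut_def
    using a b c d e by blast
qed

lemma central_comp:
  assumes "central_aut UNIV br \<mu>" "central_aut UNIV br \<nu>"
  shows "central_aut UNIV br (\<mu> \<circ> \<nu>)"
proof -
  have "(\<mu> \<circ> \<nu>) x - x = (\<mu> (\<nu> x) - \<nu> x) + (\<nu> x - x)" for x by simp
  then show ?thesis using assms aut_comp center_add unfolding central_aut_def by (metis UNIV_I)
qed

lemma part2:
  assumes pac: "partial_automatic_continuity N0 br"
  shows "partial_automatic_continuity UNIV br"
  unfolding partial_automatic_continuity_def
proof (intro allI impI)
  fix f assume f: "lie_ring_aut UNIV br f"
  obtain \<mu> g where mu: "central_aut UNIV br \<mu>" and g: "lie_ring_aut UNIV br g"
    and gN: "g ` N0 = N0" and gA: "\<forall>Y\<in>A. g Y = Y" and fe: "f = \<mu> \<circ> g"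
    using part1[OF f] by blast
  have g0: "lie_ring_aut N0 br g"
  proof -
    have "inj g" using aut_bij[OF g] bij_is_inj by blast
    then have "inj_on g N0" by (rule inj_on_subset) simp
    then have "bij_betw g N0 N0" using gN by (simp add: bij_betw_def)
    then show ?thesis using g unfolding lie_ring_aut_def by blast
  qed
  obtain \<mu>0 fb0 \<sigma>0 where mu0: "central_aut N0 br \<mu>0" and fb0: "lie_alg_aut N0 br fb0"
    and s0: "field_aut N0 br \<sigma>0" and ge: "\<forall>x\<in>N0. g x = \<mu>0 (fb0 (\<sigma>0 x))"
    using pac g0 unfolding partial_automatic_continuity_def by blast
  have mu0a: "lie_ring_aut N0 br \<mu>0" using mu0 unfolding central_aut_def by blast
  have fb0a: "lie_ring_aut N0 br fb0" using fb0 unfolding lie_alg_aut_def by blast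
  have fbN: "X \<in> N0 \<Longrightarrow> fb0 X \<in> N0" for X using fb0a unfolding lie_ring_aut_def bij_betw_def by blast
  have muc: "central_aut UNIV br (ext \<mu>0)"
  proof -
    have "ext \<mu>0 x - x \<in> lie_center UNIV br" for x
    proof -
      have "ext \<mu>0 x - x = \<mu>0 (p0 x) - p0 x" unfolding ext_def using decomp[of x] by (metis add_diff_cancel_right add_diff_eq)
      then show ?thesis using mu0 p0_in center0_center unfolding central_aut_def by metis
    qed
    then show ?thesis unfolding central_aut_def using ext_aut(1)[OF mu0a] by blast
  qed
  have fbc: "lie_alg_aut UNIV br (ext fb0)"
    unfolding lie_alg_aut_def using ext_aut(1)[OF fb0a] ext_scale[of fb0] fb0
    unfolding lie_alg_aut_def by blast
  have sc: "field_aut UNIV br (ext \<sigma>0)" and sN: "\<And>X. X \<in> N0 \<Longrightarrow> \<sigma>0 X \<in> N0"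
    using field_ext[OF s0] by blast+
  have "f x = (\<mu> \<circ> ext \<mu>0) (ext fb0 (ext \<sigma>0 x))" for x
  proof -
    have e1: "ext \<sigma>0 x = \<sigma>0 (p0 x) + pA x" unfolding ext_def ..
    have e2: "ext fb0 (ext \<sigma>0 x) = fb0 (\<sigma>0 (p0 x)) + pA x"
      unfolding e1 ext_def using p0_eq[OF sN[OF p0_in] pA_in] pA_eq[OF sN[OF p0_in] pA_in] by simp
    have e3: "ext \<mu>0 (ext fb0 (ext \<sigma>0 x)) = \<mu>0 (fb0 (\<sigma>0 (p0 x))) + pA x"
      unfolding e2 using p0_eq[OF fbN[OF sN[OF p0_in]] pA_in] pA_eq[OF fbN[OF sN[OF p0_in]] pA_in]
      by (simp add: ext_def)
    also have "\<dots> = g (p0 x) + g (pA x)" using ge p0_in gA pA_in by simp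
    also have "\<dots> = g x" using aut_add[OF g] decomp[of x] by metis
    finally show ?thesis using fe by simp
  qed
  then show "\<exists>\<mu> fbar \<sigma>. central_aut UNIV br \<mu> \<and> lie_alg_aut UNIV br fbar \<and> field_aut UNIV br \<sigma> \<and>
           (\<forall>x\<in>UNIV. f x = \<mu> (fbar (\<sigma> x)))"
    using central_comp[OF mu muc] fbc sc by (metis UNIV_I)
qed

end

theorem proposition3p4:
  fixes br :: "'a::euclidean_space \<Rightarrow> 'a \<Rightarrow> 'a"
    and N0 A :: "'a set"
  assumes "lie_algebra UNIV br"
    and "two_step_nilpotent UNIV br"
    and "lie_ideal UNIV br N0" and "lie_ideal UNIV br A"
    and "N0 \<inter> A = {0}" and "N0 + A = UNIV"
    and "lie_abelian A br"
    and "derived N0 br = lie_center N0 br"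
  shows "(\<forall>f. lie_ring_aut UNIV br f \<longrightarrow>
            (\<exists>\<mu> g. central_aut UNIV br \<mu> \<and> lie_ring_aut UNIV br g \<and>
                   g ` N0 = N0 \<and> (\<forall>Y\<in>A. g Y = Y) \<and> f = \<mu> \<circ> g))
       \<and> (partial_automatic_continuity N0 br \<longrightarrow> partial_automatic_continuity UNIV br)"
proof -
  interpret setting br N0 A
    using assms by (unfold_locales) auto
  show ?thesis using part1 part2 by blast
qed

end
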